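(* Let $R$ be a commutative elementary divisor domain, let $E,\Phi$ be $n\times n$ $d$-matrices, and let $A=P_A^{-1}EQ_A^{-1}$ with $P_A,Q_A\in GL_n(R)$. Every $n\times n$ matrix with Smith form $\Phi$ (i.e. equivalent to $\Phi$) is a left divisor of $A$ if and only if $\Phi\mid E$ and $\mathbf L(E,\Phi)=GL_n(R)$.
   Context: Elementary divisor domain: commutative integral domain over which every matrix is equivalent ($PAQ$, $P,Q$ invertible) to a $d$-matrix (diagonal $\mathrm{diag}(\varphi_1,\dots)$ with $\varphi_i\mid\varphi_{i+1}$). For $E=\mathrm{diag}(\varepsilon_1,\dots,\varepsilon_k,0,\dots,0)$, $\Phi=\mathrm{diag}(\varphi_1,\dots,\varphi_t,0,\dots,0)$ with $\varepsilon_k,\varphi_t\ne0$, $\Phi\mid E$ means $k\le t$ and $\varphi_i\mid\varepsilon_i$ for $i\le k$. $\mathbf L(E,\Phi)=\{L\in GL_n(R):\exists S\in M_n(R),\ LE=\Phi S\}$. $B$ is a left divisor of $A$ if $A=BC$ for some matrix $C$. *)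

theory Defs
  imports "Jordan_Normal_Form.Matrix"
begin

definition GL :: "nat \<Rightarrow> 'a::comm_ring_1 mat set" where
  "GL n = {L \<in> carrier_mat n n. invertible_mat L}"

definition d_matrix :: "'a::comm_ring_1 mat \<Rightarrow> bool" where
  "d_matrix D \<longleftrightarrow> diagonal_mat D \<and>
     (\<forall>i. Suc i < min (dim_row D) (dim_col D) \<longrightarrow> D $$ (i, i) dvd D $$ (Suc i, Suc i))"

definition mat_equiv :: "'a::comm_ring_1 mat \<Rightarrow> 'a mat \<Rightarrow> bool" where
  "mat_equiv A B \<longleftrightarrow> (\<exists>P Q. P \<in> GL (dim_row A) \<and> Q \<in> GL (dim_col A) \<and> P * A * Q = B)"

definition elementary_divisor_domain :: "'a::idom itself \<Rightarrow> bool" where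
  "elementary_divisor_domain (_ :: 'a itself) \<longleftrightarrow>
     (\<forall>m k (A :: 'a mat). A \<in> carrier_mat m k \<longrightarrow> (\<exists>D. d_matrix D \<and> mat_equiv A D))"

definition nz_diag :: "'a::comm_ring_1 mat \<Rightarrow> nat" where
  "nz_diag D = card {i. i < min (dim_row D) (dim_col D) \<and> D $$ (i, i) \<noteq> 0}"

text \<open>\<Phi> | E for d-matrices E = diag(eps_1..eps_k,0..), \<Phi> = diag(phi_1..phi_t,0..):
  k \<le> t and phi_i | eps_i for i \<le> k (0-based indices here).\<close>
definition d_dvd :: "'a::comm_ring_1 mat \<Rightarrow> 'a mat \<Rightarrow> bool" where
  "d_dvd Phi E \<longleftrightarrow> nz_diag E \<le> nz_diag Phi \<and>
     (\<forall>i < nz_diag E. Phi $$ (i, i) dvd E $$ (i, i))"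

definition Lset :: "nat \<Rightarrow> 'a::comm_ring_1 mat \<Rightarrow> 'a mat \<Rightarrow> 'a mat set" where
  "Lset n E Phi = {L \<in> GL n. \<exists>S \<in> carrier_mat n n. L * E = Phi * S}"

definition left_divisor :: "nat \<Rightarrow> 'a::comm_ring_1 mat \<Rightarrow> 'a mat \<Rightarrow> bool" where
  "left_divisor n B A \<longleftrightarrow> (\<exists>C \<in> carrier_mat n n. A = B * C)"

end

theory Submission
  imports Defs
begin

lemma GL_inv:
  assumes "L \<in> GL n"
  obtains Li where "Li \<in> carrier_mat n n" "L * Li = 1\<^sub>m n" "Li * L = 1\<^sub>m n"
proof -
  from assms have L: "L \<in> carrier_mat n n" and "invertible_mat L" by (auto simp: GL_def)
  then obtain B where 1: "L * B = 1\<^sub>m (dim_row L)" and 2: "B * L = 1\<^sub>m (dim_row B)"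
    unfolding invertible_mat_def inverts_mat_def by blast
  have "dim_col B = n" using arg_cong[OF 1, of dim_col] L by simp
  moreover have "dim_row B = n" using arg_cong[OF 2, of dim_col] L by simp
  ultimately have "B \<in> carrier_mat n n" by auto
  with 1 2 L show ?thesis using that by auto
qed

lemma GL_intro:
  assumes "L \<in> carrier_mat n n" "Li \<in> carrier_mat n n" "L * Li = 1\<^sub>m n" "Li * L = 1\<^sub>m n"
  shows "L \<in> GL n"
  using assms unfolding GL_def invertible_mat_def inverts_mat_def square_mat.simps by auto

lemma GL_mult:
  assumes "L \<in> GL n" "M \<in> GL n" shows "L * M \<in> GL n"
proof -
  obtain Li where Li: "Li \<in> carrier_mat n n" "L * Li = 1\<^sub>m n" "Li * L = 1\<^sub>m n" using GL_inv[OF assms(1)] by blast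
  obtain Mi where Mi: "Mi \<in> carrier_mat n n" "M * Mi = 1\<^sub>m n" "Mi * M = 1\<^sub>m n" using GL_inv[OF assms(2)] by blast
  have L: "L \<in> carrier_mat n n" and M: "M \<in> carrier_mat n n" using assms by (auto simp: GL_def)
  have "(L * M) * (Mi * Li) = L * (M * Mi) * Li"
    using L M Li(1) Mi(1) by (simp add: assoc_mult_mat[of _ n n _ n _ n])
  also have "\<dots> = 1\<^sub>m n" using L Li Mi by simp
  finally have 1: "(L * M) * (Mi * Li) = 1\<^sub>m n" .
  have "(Mi * Li) * (L * M) = Mi * (Li * L) * M"
    using L M Li(1) Mi(1) by (simp add: assoc_mult_mat[of _ n n _ n _ n])
  also have "\<dots> = 1\<^sub>m n" using M Li Mi by simp
  finally have 2: "(Mi * Li) * (L * M) = 1\<^sub>m n" .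
  show ?thesis using GL_intro[OF _ _ 1 2] L M Li Mi by auto
qed

lemma GL_one: "1\<^sub>m n \<in> GL n"
  by (rule GL_intro[of _ n "1\<^sub>m n"]) auto

lemma GL_inv_GL:
  assumes "L \<in> carrier_mat n n" "Li \<in> carrier_mat n n" "L * Li = 1\<^sub>m n" "Li * L = 1\<^sub>m n"
  shows "Li \<in> GL n"
  using GL_intro[of Li n L] assms by auto

lemma diag_mult_entry:
  assumes Phi: "Phi \<in> carrier_mat n n" and S: "S \<in> carrier_mat n n" and d: "diagonal_mat Phi"
    and i: "i < n" and j: "j < n"
  shows "(Phi * S) $$ (i, j) = Phi $$ (i, i) * S $$ (i, j)"
proof -
  have "(Phi * S) $$ (i, j) = (\<Sum>k\<in>{0..<n}. Phi $$ (i, k) * S $$ (k, j))"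
    using Phi S i j by (simp add: index_mult_mat scalar_prod_def)
  also have "\<dots> = (\<Sum>k\<in>{0..<n}. if k = i then Phi $$ (i, i) * S $$ (i, j) else 0)"
    using d Phi i by (intro sum.cong) (auto simp: diagonal_mat_def)
  also have "\<dots> = Phi $$ (i, i) * S $$ (i, j)" using i by simp
  finally show ?thesis .
qed

theorem theorem5p3:
  fixes E Phi A P_A Q_A :: "'a::idom mat" and n :: nat
  assumes "elementary_divisor_domain TYPE('a)"
    and "E \<in> carrier_mat n n" and "Phi \<in> carrier_mat n n"
    and "d_matrix E" and "d_matrix Phi"
    and "P_A \<in> GL n" and "Q_A \<in> GL n"
    and "A \<in> carrier_mat n n" and "P_A * A * Q_A = E"
  shows "(\<forall>B \<in> carrier_mat n n. mat_equiv B Phi \<longrightarrow> left_divisor n B A)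
         \<longleftrightarrow> (d_dvd Phi E \<and> Lset n E Phi = GL n)"
proof -
  note E = assms(2) and Phi = assms(3) and AA = assms(8) and eq = assms(9)
  have PA: "P_A \<in> carrier_mat n n" and QA: "Q_A \<in> carrier_mat n n"
    using assms(6,7) by (auto simp: GL_def)
  obtain Pi where Pi: "Pi \<in> carrier_mat n n" "P_A * Pi = 1\<^sub>m n" "Pi * P_A = 1\<^sub>m n"
    using GL_inv[OF assms(6)] by blast
  obtain Qi where Qi: "Qi \<in> carrier_mat n n" "Q_A * Qi = 1\<^sub>m n" "Qi * Q_A = 1\<^sub>m n"
    using GL_inv[OF assms(7)] by blast
  have Aeq: "A = Pi * E * Qi"
  proof -
    have "Pi * E * Qi = Pi * (P_A * A * Q_A) * Qi" using eq by simp
    also have "\<dots> = (Pi * P_A) * A * (Q_A * Qi)"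
      using PA QA Pi(1) Qi(1) AA by (simp add: assoc_mult_mat[of _ n n _ n _ n])
    also have "\<dots> = A" using Pi Qi AA by simp
    finally show ?thesis by simp
  qed
  have ddvd: "d_dvd Phi E" if L: "Lset n E Phi = GL n"
  proof -
    have "1\<^sub>m n \<in> Lset n E Phi" using L GL_one by simp
    then obtain S where S: "S \<in> carrier_mat n n" and ES: "1\<^sub>m n * E = Phi * S"
      unfolding Lset_def by blast
    have ES': "E = Phi * S" using ES E by simp
    have dP: "diagonal_mat Phi" using assms(5) by (simp add: d_matrix_def)
    have ent: "E $$ (i, i) = Phi $$ (i, i) * S $$ (i, i)" if "i < n" for i
      using diag_mult_entry[OF Phi S dP that that] ES' by simp
    have sub: "{i. i < min (dim_row E) (dim_col E) \<and> E $$ (i, i) \<noteq> 0}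
        \<subseteq> {i. i < min (dim_row Phi) (dim_col Phi) \<and> Phi $$ (i, i) \<noteq> 0}"
      using E Phi ent by auto
    have "nz_diag E \<le> nz_diag Phi" unfolding nz_diag_def
      by (rule card_mono[OF _ sub]) auto
    moreover have "nz_diag E \<le> n"
    proof -
      have "{i. i < min (dim_row E) (dim_col E) \<and> E $$ (i, i) \<noteq> 0} \<subseteq> {0..<n}" using E by auto
      then show ?thesis unfolding nz_diag_def using card_mono[of "{0..<n}"] by fastforce
    qed
    ultimately show ?thesis unfolding d_dvd_def using ent by auto
  qed
  show ?thesis
  proof
    assume H: "\<forall>B \<in> carrier_mat n n. mat_equiv B Phi \<longrightarrow> left_divisor n B A"
    have "Lset n E Phi = GL n"
    proof
      show "Lset n E Phi \<subseteq> GL n" unfolding Lset_def by auto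
      show "GL n \<subseteq> Lset n E Phi"
      proof
        fix L :: "'a mat" assume LG: "L \<in> GL n"
        have L: "L \<in> carrier_mat n n" using LG by (auto simp: GL_def)
        obtain Li where Li: "Li \<in> carrier_mat n n" "L * Li = 1\<^sub>m n" "Li * L = 1\<^sub>m n"
          using GL_inv[OF LG] by blast
        define B where "B = Pi * Li * Phi"
        have B: "B \<in> carrier_mat n n" using Pi Li Phi by (simp add: B_def)
        have "(L * P_A) * B * 1\<^sub>m n = L * (P_A * Pi) * Li * Phi"
          using L PA Pi(1) Li(1) Phi B by (simp add: B_def assoc_mult_mat[of _ n n _ n _ n])
        also have "\<dots> = Phi" using L PA Pi Li Phi
          by (simp add: assoc_mult_mat[of _ n n _ n _ n])
        finally have "(L * P_A) * B * 1\<^sub>m n = Phi" .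
        hence "mat_equiv B Phi" unfolding mat_equiv_def
          using B GL_mult[OF LG assms(6)] GL_one[of n] by (intro exI[of _ "L * P_A"] exI[of _ "1\<^sub>m n"]) auto
        with H B obtain C where C: "C \<in> carrier_mat n n" and AC: "A = B * C"
          unfolding left_divisor_def by blast
        have "L * E = L * (P_A * (B * C) * Q_A)" using eq AC by simp
        also have "\<dots> = L * (P_A * Pi) * Li * Phi * C * Q_A"
          using L PA Pi(1) Li(1) Phi C QA by (simp add: B_def assoc_mult_mat[of _ n n _ n _ n])
        also have "\<dots> = (L * Li) * Phi * C * Q_A"
          using L PA Pi Li Phi C QA by simp
        also have "\<dots> = Phi * C * Q_A"
          using Li Phi by simp
        also have "\<dots> = Phi * (C * Q_A)"
          using Phi C QA by (simp add: assoc_mult_mat[of _ n n _ n _ n])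
        finally show "L \<in> Lset n E Phi" unfolding Lset_def using LG C QA by auto
      qed
    qed
    with ddvd show "d_dvd Phi E \<and> Lset n E Phi = GL n" by blast
  next
    assume "d_dvd Phi E \<and> Lset n E Phi = GL n"
    hence LS: "Lset n E Phi = GL n" by blast
    show "\<forall>B \<in> carrier_mat n n. mat_equiv B Phi \<longrightarrow> left_divisor n B A"
    proof (intro ballI impI)
      fix B assume B: "B \<in> carrier_mat n n" and "mat_equiv B Phi"
      then obtain P Q where PG: "P \<in> GL n" and QG: "Q \<in> GL n" and PBQ: "P * B * Q = Phi"
        unfolding mat_equiv_def by auto
      have P: "P \<in> carrier_mat n n" and Q: "Q \<in> carrier_mat n n" using PG QG by (auto simp: GL_def)
      obtain Pv where Pv: "Pv \<in> carrier_mat n n" "P * Pv = 1\<^sub>m n" "Pv * P = 1\<^sub>m n"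
        using GL_inv[OF PG] by blast
      have PiG: "Pi \<in> GL n" using GL_inv_GL[OF PA Pi(1) Pi(2,3)] .
      have "P * Pi \<in> Lset n E Phi" using LS GL_mult[OF PG PiG] by simp
      then obtain S where S: "S \<in> carrier_mat n n" and LE: "P * Pi * E = Phi * S"
        unfolding Lset_def by blast
      have "A = Pi * E * Qi" by (rule Aeq)
      also have "\<dots> = (Pv * P) * Pi * E * Qi" using Pv Pi E Qi by simp
      also have "\<dots> = Pv * (P * Pi * E) * Qi"
        using Pv(1) P Pi(1) E Qi(1) by (simp add: assoc_mult_mat[of _ n n _ n _ n])
      also have "\<dots> = Pv * (P * B * Q) * S * Qi"
        using LE PBQ Pv(1) Phi S Qi(1) by (simp add: assoc_mult_mat[of _ n n _ n _ n])
      also have "\<dots> = (Pv * P) * B * (Q * S * Qi)"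
        using Pv(1) P B Q S Qi(1) by (simp add: assoc_mult_mat[of _ n n _ n _ n])
      also have "\<dots> = B * (Q * S * Qi)" using Pv B by simp
      finally show "left_divisor n B A" unfolding left_divisor_def using Q S Qi by auto
    qed
  qed
qed

end
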